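(* With $Y^+$ as in the context, there is an isomorphism of $\mathbb{Z}$-modules $\mathrm{BF}(Y^+)\cong\mathbb{Z}^{\frac{p-3}{2}}\oplus\mathbb{Z}/p\mathbb{Z}$.
   Context: Let $p$ be an odd prime, $\Delta=\mathrm{Gal}(\mathbb{Q}(\zeta_p)/\mathbb{Q})$, $\sigma_i:\zeta_p\mapsto\zeta_p^i$, $j=\sigma_{-1}$. Digraphs have incidence $e\mapsto(o(e),t(e))$; the derived digraph $X(G,\alpha)$ of $\alpha:E_X\to G$ has vertices $V_X\times G$, edges $E_X\times G$, $o(e,\sigma)=(o(e),\sigma)$, $t(e,\sigma)=(t(e),\sigma\alpha(e))$, with $G$ acting by left multiplication on the second coordinate. $X$ is the bouquet with $\frac{p-1}{2}p+1$ loops $e_0$, $e_{i,k}$ ($1\le k\le i\le p-1$), $\alpha(e_0)=\sigma_1$, $\alpha(e_{i,k})=\sigma_i^{-1}$, $Y=X(\Delta,\alpha)$, and $Y^+=Y_{\langle j\rangle}$ is the quotient digraph by $\langle j\rangle$. For a finite digraph $W$, $\mathcal{A}_W(w)=\sum_{o(\varepsilon)=w}t(\varepsilon)$ on $\mathbb{Z}V_W$ and $\mathrm{BF}(W)=\mathrm{coker}(\mathcal{I}-\mathcal{A}_W)$. *)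

theory Defs
  imports "HOL-Algebra.Free_Abelian_Groups" "HOL-Number_Theory.Residues"
    "Graph_Theory.Digraph"
begin

text \<open>Digraphs are Graph_Theory's pre_digraph records; o(e) = tail, t(e) = head.\<close>

definition derived_digraph ::
  "('v,'e) pre_digraph \<Rightarrow> ('g,'b) monoid_scheme \<Rightarrow> ('e \<Rightarrow> 'g) \<Rightarrow> ('v \<times> 'g, 'e \<times> 'g) pre_digraph"
  where "derived_digraph X G \<alpha> =
    \<lparr> verts = verts X \<times> carrier G,
      arcs = arcs X \<times> carrier G,
      tail = (\<lambda>(e,s). (tail X e, s)),
      head = (\<lambda>(e,s). (head X e, s \<otimes>\<^bsub>G\<^esub> \<alpha> e)) \<rparr>"

definition left_orbit :: "('g,'b) monoid_scheme \<Rightarrow> 'g set \<Rightarrow> 'a \<times> 'g \<Rightarrow> ('a \<times> 'g) set"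
  where "left_orbit G H x = {(fst x, h \<otimes>\<^bsub>G\<^esub> snd x) | h. h \<in> H}"

definition quotient_digraph ::
  "('v \<times> 'g, 'e \<times> 'g) pre_digraph \<Rightarrow> ('g,'b) monoid_scheme \<Rightarrow> 'g set
     \<Rightarrow> (('v \<times> 'g) set, ('e \<times> 'g) set) pre_digraph"
  where "quotient_digraph Y G H =
    \<lparr> verts = left_orbit G H ` verts Y,
      arcs = left_orbit G H ` arcs Y,
      tail = (\<lambda>Q. left_orbit G H (tail Y (SOME e. e \<in> Q))),
      head = (\<lambda>Q. left_orbit G H (head Y (SOME e. e \<in> Q))) \<rparr>"

definition adj_op :: "('v,'e) pre_digraph \<Rightarrow> 'v \<Rightarrow> 'v \<Rightarrow>\<^sub>0 int"
  where "adj_op W w = (\<Sum>\<epsilon>\<in>{\<epsilon> \<in> arcs W. tail W \<epsilon> = w}. frag_of (head W \<epsilon>))"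

definition BF :: "('v,'e) pre_digraph \<Rightarrow> ('v \<Rightarrow>\<^sub>0 int) set monoid"
  where "BF W = free_Abelian_group (verts W) Mod
     ((\<lambda>c. c - frag_extend (adj_op W) c) ` carrier (free_Abelian_group (verts W)))"

text \<open>Delta = Gal(Q(zeta_p)/Q), identified with (Z/pZ)^* via sigma_i <-> i mod p.\<close>
definition Delta :: "nat \<Rightarrow> int monoid"
  where "Delta p = units_of (residue_ring (int p))"

definition sigma :: "nat \<Rightarrow> nat \<Rightarrow> int"
  where "sigma p i = int i mod int p"

datatype bedge = E0 | E nat nat

definition bouquetX :: "nat \<Rightarrow> (unit, bedge) pre_digraph"
  where "bouquetX p =
    \<lparr> verts = {()},
      arcs = {E0} \<union> {E i k | i k. 1 \<le> k \<and> k \<le> i \<and> i \<le> p - 1},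
      tail = (\<lambda>_. ()),
      head = (\<lambda>_. ()) \<rparr>"

definition alphaX :: "nat \<Rightarrow> bedge \<Rightarrow> int"
  where "alphaX p e = (case e of E0 \<Rightarrow> sigma p 1
                        | E i k \<Rightarrow> inv\<^bsub>Delta p\<^esub> (sigma p i))"

definition Y :: "nat \<Rightarrow> (unit \<times> int, bedge \<times> int) pre_digraph"
  where "Y p = derived_digraph (bouquetX p) (Delta p) (alphaX p)"

definition jconj :: "nat \<Rightarrow> int"
  where "jconj p = sigma p (p - 1)"

definition Yplus :: "nat \<Rightarrow> ((unit \<times> int) set, (bedge \<times> int) set) pre_digraph"
  where "Yplus p = quotient_digraph (Y p) (Delta p) (generate (Delta p) {jconj p})"

end

theory Submission
  imports Defs
begin


lemma frag_cmul_const_sum: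
  "finite A \<Longrightarrow> (\<Sum>x\<in>A. c) = frag_cmul (int (card A)) c"
  by (induction A rule: finite_induct) (auto simp: frag_cmul_distrib)

lemma lookup_sum_frag_of_set:
  "finite V \<Longrightarrow> Poly_Mapping.lookup (\<Sum>v\<in>V. frag_of v) x = (if x \<in> V then 1 else 0)"
  by (simp add: lookup_sum)

lemma lookup_sum_idx:
  "Poly_Mapping.lookup (\<Sum>i<(m::nat). frag_cmul (a i) (frag_of i)) j = (if j < m then a j else 0)"
proof -
  have "(\<Sum>x<m. a x * (if j = x then 1 else 0)) = (\<Sum>x<m. if j = x then a x else 0)"
    by (rule sum.cong) auto
  also have "\<dots> = (if j < m then a j else 0)" by (simp only: sum.delta'[OF finite_lessThan] lessThan_iff)
  finally show ?thesis by (simp add: lookup_sum)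
qed

lemma keys_subI: "(\<And>x. x \<notin> V \<Longrightarrow> Poly_Mapping.lookup c x = 0) \<Longrightarrow> Poly_Mapping.keys c \<subseteq> V"
  by (auto simp: in_keys_iff)

lemma BF_generic:
  fixes W :: "('v,'e) pre_digraph" and p :: nat
  assumes finV: "finite (verts W)" and v0: "v0 \<in> verts W" and p: "p > 1"
    and hadj: "\<And>w. w \<in> verts W \<Longrightarrow> adj_op W w = frag_of w + frag_cmul (int p) (\<Sum>v\<in>verts W. frag_of v)"
  shows "BF W \<cong> DirProd (free_Abelian_group {..<card (verts W) - 1}) (integer_mod_group p)"
proof -
  define V where "V = verts W"
  define N where "N = (\<Sum>v\<in>V. frag_of v)"
  define m where "m = card V - 1"
  let ?G = "free_Abelian_group V"
  let ?H = "DirProd (free_Abelian_group {..<m}) (integer_mod_group p)"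
  have finV': "finite V" using finV by (simp add: V_def)
  have v0': "v0 \<in> V" using v0 by (simp add: V_def)
  have cardV: "card (V - {v0}) = m" using finV' v0' by (simp add: m_def)
  obtain b where b: "bij_betw b {0..<m} (V - {v0})"
    using ex_bij_betw_nat_finite[of "V - {v0}"] finV' cardV by auto
  have binj: "inj_on b {..<m}" and bimg: "b ` {..<m} = V - {v0}"
    using b by (auto simp: bij_betw_def lessThan_atLeast0)
  have bsum: "(\<Sum>i<m. f i * (if b j = b i then 1 else 0)) = f j" if "j < m" for f :: "nat \<Rightarrow> int" and j
  proof -
    have "(\<Sum>i<m. f i * (if b j = b i then 1 else 0)) = (\<Sum>i<m. if j = i then f i else 0)"
      using binj that by (intro sum.cong) (auto simp: inj_on_def)
    then show ?thesis using that by simp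
  qed
  have lookN: "\<And>x. Poly_Mapping.lookup N x = (if x \<in> V then 1 else 0)"
    using finV' by (simp add: N_def lookup_sum_frag_of_set)
  have hadj': "\<And>w. w \<in> V \<Longrightarrow> adj_op W w = frag_of w + frag_cmul (int p) N"
    using hadj by (simp add: V_def N_def)
  have img: "c - frag_extend (adj_op W) c = frag_cmul (- int p * (\<Sum>v\<in>V. Poly_Mapping.lookup c v)) N"
    if "Poly_Mapping.keys c \<subseteq> V" for c
    using that
  proof (induction c rule: frag_induction)
    case zero
    then show ?case by simp
  next
    case (one x)
    then show ?case using finV' by (simp add: hadj')
  next
    case (diff a b)
    have "(a - b) - frag_extend (adj_op W) (a - b) = (a - frag_extend (adj_op W) a) - (b - frag_extend (adj_op W) b)"
      by (simp add: frag_extend_diff)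
    also have "\<dots> = frag_cmul (- int p * (\<Sum>v\<in>V. Poly_Mapping.lookup a v) - (- int p * (\<Sum>v\<in>V. Poly_Mapping.lookup b v))) N"
      using diff by (simp only: frag_cmul_diff_distrib)
    also have "\<dots> = frag_cmul (- int p * (\<Sum>v\<in>V. Poly_Mapping.lookup (a - b) v)) N"
      by (simp add: lookup_minus sum_subtractf right_diff_distrib)
    finally show ?case .
  qed
  define K where "K = {frag_cmul (int p * k) N | k. True}"
  have S: "(\<lambda>c. c - frag_extend (adj_op W) c) ` carrier ?G = K"
  proof
    show "(\<lambda>c. c - frag_extend (adj_op W) c) ` carrier ?G \<subseteq> K"
    proof
      fix y assume "y \<in> (\<lambda>c. c - frag_extend (adj_op W) c) ` carrier ?G"
      then obtain c where c: "Poly_Mapping.keys c \<subseteq> V" "y = c - frag_extend (adj_op W) c" by auto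
      then have "y = frag_cmul (int p * (- (\<Sum>v\<in>V. Poly_Mapping.lookup c v))) N" using img by simp
      then show "y \<in> K" unfolding K_def by blast
    qed
  next
    show "K \<subseteq> (\<lambda>c. c - frag_extend (adj_op W) c) ` carrier ?G"
    proof
      fix y assume "y \<in> K"
      then obtain k where k: "y = frag_cmul (int p * k) N" unfolding K_def by blast
      define c where "c = frag_cmul (-k) (frag_of v0)"
      have ck: "Poly_Mapping.keys c \<subseteq> V" using v0' by (intro keys_subI) (auto simp: c_def)
      have "(\<Sum>v\<in>V. Poly_Mapping.lookup c v) = (\<Sum>v\<in>V. if v0 = v then -k else 0)"
        by (rule sum.cong) (auto simp: c_def)
      also have "\<dots> = -k" using finV' v0' by (subst sum.delta') auto
      finally have "(\<Sum>v\<in>V. Poly_Mapping.lookup c v) = -k" .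
      then have "y = c - frag_extend (adj_op W) c" using img[OF ck] k by simp
      then show "y \<in> (\<lambda>c. c - frag_extend (adj_op W) c) ` carrier ?G" using ck by auto
    qed
  qed
  define \<phi> where "\<phi> c = ((\<Sum>i<m. frag_cmul (Poly_Mapping.lookup c (b i) - Poly_Mapping.lookup c v0) (frag_of i)),
                        Poly_Mapping.lookup c v0 mod int p)" for c :: "'v \<Rightarrow>\<^sub>0 int"
  have grpH: "group ?H" by (intro DirProd_group) simp_all
  have carrH: "carrier ?H = {d. Poly_Mapping.keys d \<subseteq> {..<m}} \<times> {0..<int p}"
    using p by (simp add: carrier_integer_mod_group free_Abelian_group_def)
  have phiC: "\<phi> c \<in> carrier ?H" for c
    unfolding carrH \<phi>_def using p
    by (auto intro!: keys_subI simp: lookup_sum_idx split: if_splits)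
  have hom: "group_hom ?G ?H \<phi>"
  proof (intro group_hom.intro group_hom_axioms.intro)
    show "group ?G" by simp
    show "group ?H" by (rule grpH)
    show "\<phi> \<in> hom ?G ?H"
    proof (rule homI)
      fix x assume "x \<in> carrier ?G" show "\<phi> x \<in> carrier ?H" by (rule phiC)
    next
      fix x y assume "x \<in> carrier ?G" "y \<in> carrier ?G"
      have 1: "fst (\<phi> (x + y)) = fst (\<phi> x) + fst (\<phi> y)"
        by (rule poly_mapping_eqI) (simp add: \<phi>_def lookup_sum_idx lookup_add)
      have 2: "snd (\<phi> (x + y)) = (snd (\<phi> x) + snd (\<phi> y)) mod int p"
        by (simp add: \<phi>_def lookup_add mod_add_eq)
      show "\<phi> (x \<otimes>\<^bsub>?G\<^esub> y) = \<phi> x \<otimes>\<^bsub>?H\<^esub> \<phi> y"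
        using 1 2 by (simp add: mult_DirProd' prod_eq_iff)
    qed
  qed
  have onto: "\<phi> ` carrier ?G = carrier ?H"
  proof
    show "\<phi> ` carrier ?G \<subseteq> carrier ?H" using phiC by blast
  next
    show "carrier ?H \<subseteq> \<phi> ` carrier ?G"
    proof
      fix z assume z: "z \<in> carrier ?H"
      obtain d r where dr: "z = (d, r)" by (cases z)
      have d: "Poly_Mapping.keys d \<subseteq> {..<m}" and r: "0 \<le> r" "r < int p" using z dr p by (auto simp: carrier_integer_mod_group)
      define c where "c = (\<Sum>i<m. frag_cmul (Poly_Mapping.lookup d i) (frag_of (b i))) + frag_cmul r N"
      have lc: "Poly_Mapping.lookup c x = (\<Sum>i<m. Poly_Mapping.lookup d i * (if x = b i then 1 else 0)) + r * (if x \<in> V then 1 else 0)" for x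
        by (simp add: c_def lookup_add lookup_sum lookN)
      have lcv0: "Poly_Mapping.lookup c v0 = r"
      proof -
        have "\<forall>i<m. v0 \<noteq> b i" using bimg by (metis Diff_iff imageI lessThan_iff singletonI)
        then show ?thesis unfolding lc using v0' by simp
      qed
      have lcb: "Poly_Mapping.lookup c (b j) = Poly_Mapping.lookup d j + r" if "j < m" for j
        unfolding lc using bsum[OF that] bimg that by auto
      have ck: "Poly_Mapping.keys c \<subseteq> V"
      proof (rule keys_subI)
        fix x assume "x \<notin> V"
        then have "\<forall>i<m. x \<noteq> b i" using bimg by auto
        then show "Poly_Mapping.lookup c x = 0" unfolding lc using \<open>x \<notin> V\<close> by simp
      qed
      have "fst (\<phi> c) = d"
      proof (rule poly_mapping_eqI)
        fix j
        show "Poly_Mapping.lookup (fst (\<phi> c)) j = Poly_Mapping.lookup d j"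
          using d by (auto simp: \<phi>_def lookup_sum_idx lcb lcv0 in_keys_iff)
      qed
      moreover have "snd (\<phi> c) = r" using r by (simp add: \<phi>_def lcv0)
      ultimately have "\<phi> c = z" using dr by (simp add: prod_eq_iff)
      then show "z \<in> \<phi> ` carrier ?G" using ck by force
    qed
  qed
  have kern: "kernel ?G ?H \<phi> = K"
  proof
    show "kernel ?G ?H \<phi> \<subseteq> K"
    proof
      fix c assume "c \<in> kernel ?G ?H \<phi>"
      then have ck: "Poly_Mapping.keys c \<subseteq> V" and ph: "\<phi> c = (0, 0)" by (auto simp: kernel_def)
      have eq: "Poly_Mapping.lookup c (b j) = Poly_Mapping.lookup c v0" if "j < m" for j
      proof -
        have "Poly_Mapping.lookup (fst (\<phi> c)) j = 0" using ph by simp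
        then show ?thesis using that by (simp add: \<phi>_def lookup_sum_idx)
      qed
      have "c = frag_cmul (Poly_Mapping.lookup c v0) N"
      proof (rule poly_mapping_eqI)
        fix x
        show "Poly_Mapping.lookup c x = Poly_Mapping.lookup (frag_cmul (Poly_Mapping.lookup c v0) N) x"
        proof (cases "x \<in> V")
          case True
          show ?thesis
          proof (cases "x = v0")
            case False
            then obtain j where "j < m" "x = b j" using True bimg by (metis DiffI imageE lessThan_iff singletonD)
            then show ?thesis using eq True by (simp add: lookN)
          qed (simp add: lookN True v0')
        next
          case False
          then show ?thesis using ck by (auto simp: lookN in_keys_iff)
        qed
      qed
      moreover have "int p dvd Poly_Mapping.lookup c v0" using ph by (simp add: \<phi>_def dvd_eq_mod_eq_0)
      moreover obtain k where "Poly_Mapping.lookup c v0 = int p * k" using calculation(2) by (elim dvdE)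
      ultimately show "c \<in> K" unfolding K_def by auto
    qed
  next
    show "K \<subseteq> kernel ?G ?H \<phi>"
    proof
      fix c assume "c \<in> K"
      then obtain k where k: "c = frag_cmul (int p * k) N" unfolding K_def by blast
      have ck: "Poly_Mapping.keys c \<subseteq> V" by (rule keys_subI) (simp add: k lookN)
      have "b i \<in> V" if "i < m" for i using bimg that by auto
      then have "\<phi> c = (0, 0)" using v0' by (simp add: \<phi>_def k lookN)
      then show "c \<in> kernel ?G ?H \<phi>" using ck by (simp add: kernel_def)
    qed
  qed
  have "BF W = ?G Mod K" unfolding BF_def using S by (simp add: V_def)
  also have "\<dots> = ?G Mod kernel ?G ?H \<phi>" by (simp add: kern)
  finally have "BF W = ?G Mod kernel ?G ?H \<phi>" .
  moreover have "?G Mod kernel ?G ?H \<phi> \<cong> ?H"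
    by (rule group_hom.FactGroup_iso[OF hom onto])
  ultimately show ?thesis by (simp add: V_def m_def)
qed



locale PP =
  fixes p :: nat
  assumes pp: "prime p" and po: "odd p"
begin

abbreviation "D \<equiv> Delta p"
abbreviation "C \<equiv> {1..int p - 1}"
abbreviation "H \<equiv> generate (Delta p) {jconj p}"
definition neg :: "int \<Rightarrow> int" where "neg s = int p - s"

lemma p3: "p \<ge> 3"
proof -
  have "p \<ge> 2" using pp prime_ge_2_nat by blast
  moreover have "p \<noteq> 2" using po by auto
  ultimately show ?thesis by simp
qed

interpretation R: residues_prime p "residue_ring (int p)"
  by unfold_locales (rule pp)

lemma cgD: "comm_group D"
  unfolding Delta_def by (rule R.units_comm_group)

lemma carrD: "carrier D = C"
  unfolding Delta_def units_of_carrier using R.res_prime_units_eq p3 by (simp add: of_nat_diff)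

lemma multD: "x \<otimes>\<^bsub>D\<^esub> y = x * y mod int p"
  unfolding Delta_def by (simp add: units_of_mult R.res_mult_eq)

lemma oneD: "\<one>\<^bsub>D\<^esub> = 1"
  unfolding Delta_def by (simp add: units_of_one R.res_one_eq)

lemma m1mod[simp]: "-1 mod int p = int p - 1" "(int p - 1) mod int p = int p - 1"
  using p3 by (simp_all add: zmod_minus1 mod_pos_pos_trivial)

lemma j_eq: "jconj p = int p - 1"
proof -
  have b: "int (p-1) = int p - 1" using p3 by simp
  show ?thesis unfolding jconj_def sigma_def by (simp only: b m1mod)
qed

lemma neg_C: "s \<in> C \<Longrightarrow> neg s \<in> C"
  by (auto simp: neg_def)

lemma neg_neg[simp]: "neg (neg s) = s"
  by (simp add: neg_def)

lemma neg_ne: "s \<in> C \<Longrightarrow> neg s \<noteq> s"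
proof
  assume "s \<in> C" "neg s = s"
  then have "int p = 2 * s" by (simp add: neg_def)
  then have "even (int p)" by simp
  then show False using po by simp
qed

lemma j_mult: "s \<in> C \<Longrightarrow> jconj p \<otimes>\<^bsub>D\<^esub> s = neg s"
proof -
  assume s: "s \<in> C"
  have "(int p - 1) * s = int p * (s - 1) + (int p - s)" by (simp add: algebra_simps)
  then have "(int p - 1) * s mod int p = (int p - s) mod int p" by (simp add: mod_add_left_eq[symmetric])
  also have "\<dots> = int p - s" using s by (intro mod_pos_pos_trivial) auto
  finally show ?thesis by (simp add: multD j_eq neg_def)
qed

lemma jC: "jconj p \<in> C" using p3 by (simp add: j_eq)

lemma jj: "jconj p \<otimes>\<^bsub>D\<^esub> jconj p = \<one>\<^bsub>D\<^esub>"
  using j_mult[OF jC] p3 by (simp add: oneD j_eq neg_def)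

lemma H_eq: "H = {1, jconj p}"
proof
  interpret G: comm_group D by (rule cgD)
  have jc: "jconj p \<in> carrier D" using jC carrD by simp
  have ij: "inv\<^bsub>D\<^esub> (jconj p) = jconj p"
    using jj jc by (simp add: G.inv_equality)
  show "H \<subseteq> {1, jconj p}"
  proof
    fix x assume "x \<in> H"
    then show "x \<in> {1, jconj p}"
    proof (induction rule: generate.induct)
      case one then show ?case by (simp add: oneD)
    next
      case (incl h) then show ?case by simp
    next
      case (inv h) then show ?case using ij by simp
    next
      case (eng h1 h2)
      have o1: "1 \<in> carrier D" using carrD p3 by simp
      have "1 \<otimes>\<^bsub>D\<^esub> 1 = 1" "1 \<otimes>\<^bsub>D\<^esub> jconj p = jconj p" "jconj p \<otimes>\<^bsub>D\<^esub> 1 = jconj p"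
        using jc p3 by (simp_all add: multD j_eq)
      moreover have "jconj p \<otimes>\<^bsub>D\<^esub> jconj p = 1" using jj by (simp add: oneD)
      ultimately show ?case using eng by auto
    qed
  qed
  show "{1, jconj p} \<subseteq> H"
    using generate.one[of D "{jconj p}"] generate.incl[of "jconj p" "{jconj p}" D] by (simp add: oneD)
qed

lemma lo_eq: "s \<in> C \<Longrightarrow> left_orbit D H (a, s) = {(a, s), (a, neg s)}"
proof -
  assume s: "s \<in> C"
  have e: "1 \<otimes>\<^bsub>D\<^esub> s = s" using s by (simp add: multD)
  have "left_orbit D H (a, s) = {(a, 1 \<otimes>\<^bsub>D\<^esub> s), (a, jconj p \<otimes>\<^bsub>D\<^esub> s)}"
    unfolding left_orbit_def H_eq by auto
  then show ?thesis by (simp only: e j_mult[OF s])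
qed


definition Ov :: "int \<Rightarrow> (unit \<times> int) set" where "Ov s = {((), s), ((), neg s)}"
definition Ar :: "bedge \<Rightarrow> int \<Rightarrow> (bedge \<times> int) set" where "Ar e s = {(e, s), (e, neg s)}"

lemma Ov_neg: "Ov (neg s) = Ov s" by (auto simp: Ov_def)
lemma Ar_neg: "Ar e (neg s) = Ar e s" by (auto simp: Ar_def)

lemma Ov_eq: "s \<in> C \<Longrightarrow> t \<in> C \<Longrightarrow> Ov t = Ov s \<longleftrightarrow> (t = s \<or> t = neg s)"
proof
  assume "Ov t = Ov s"
  moreover have "((), t) \<in> Ov t" by (simp add: Ov_def)
  ultimately have "((), t) \<in> Ov s" by simp
  then show "t = s \<or> t = neg s" by (auto simp: Ov_def)
next
  assume "t = s \<or> t = neg s" then show "Ov t = Ov s" using Ov_neg by auto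
qed

lemma lo_Ov: "s \<in> C \<Longrightarrow> left_orbit D H ((), s) = Ov s"
  by (simp add: lo_eq Ov_def)

lemma lo_Ar: "s \<in> C \<Longrightarrow> left_orbit D H (e, s) = Ar e s"
  by (simp add: lo_eq Ar_def)

lemma mC: "s \<in> C \<Longrightarrow> a \<in> C \<Longrightarrow> s \<otimes>\<^bsub>D\<^esub> a \<in> C"
proof -
  interpret G: comm_group D by (rule cgD)
  show "s \<in> C \<Longrightarrow> a \<in> C \<Longrightarrow> s \<otimes>\<^bsub>D\<^esub> a \<in> C" using G.m_closed carrD by auto
qed

lemma iC: "s \<in> C \<Longrightarrow> inv\<^bsub>D\<^esub> s \<in> C"
proof -
  interpret G: comm_group D by (rule cgD)
  show "s \<in> C \<Longrightarrow> inv\<^bsub>D\<^esub> s \<in> C" using G.inv_closed carrD by auto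
qed

lemma neg_mult: "s \<in> C \<Longrightarrow> a \<in> C \<Longrightarrow> neg s \<otimes>\<^bsub>D\<^esub> a = neg (s \<otimes>\<^bsub>D\<^esub> a)"
proof -
  interpret G: comm_group D by (rule cgD)
  assume s: "s \<in> C" and a: "a \<in> C"
  have "neg s \<otimes>\<^bsub>D\<^esub> a = (jconj p \<otimes>\<^bsub>D\<^esub> s) \<otimes>\<^bsub>D\<^esub> a" using j_mult[OF s] by simp
  also have "\<dots> = jconj p \<otimes>\<^bsub>D\<^esub> (s \<otimes>\<^bsub>D\<^esub> a)" using s a jC carrD by (simp add: G.m_assoc)
  also have "\<dots> = neg (s \<otimes>\<^bsub>D\<^esub> a)" using j_mult mC s a by simp
  finally show ?thesis .
qed

lemma Yp_verts: "verts (Yplus p) = Ov ` C"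
proof -
  have "verts (Yplus p) = left_orbit D H ` ({()} \<times> C)"
    by (simp add: Yplus_def quotient_digraph_def Y_def derived_digraph_def bouquetX_def carrD)
  also have "\<dots> = (\<lambda>x. Ov (snd x)) ` ({()} \<times> C)"
    by (rule image_cong) (auto simp: lo_Ov)
  also have "\<dots> = Ov ` C" by force
  finally show ?thesis .
qed

lemma Yp_arcs: "arcs (Yplus p) = (\<lambda>x. Ar (fst x) (snd x)) ` (arcs (bouquetX p) \<times> C)"
proof -
  have "arcs (Yplus p) = left_orbit D H ` (arcs (bouquetX p) \<times> C)"
    by (simp add: Yplus_def quotient_digraph_def Y_def derived_digraph_def carrD)
  also have "\<dots> = (\<lambda>x. Ar (fst x) (snd x)) ` (arcs (bouquetX p) \<times> C)"
    by (rule image_cong) (auto simp: lo_Ar)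
  finally show ?thesis .
qed

lemma Yp_tail: "tail (Yplus p) Q = left_orbit D H ((), snd (SOME x. x \<in> Q))"
  by (simp add: Yplus_def quotient_digraph_def Y_def derived_digraph_def case_prod_beta)

lemma Yp_head: "head (Yplus p) Q = left_orbit D H ((), snd (SOME x. x \<in> Q) \<otimes>\<^bsub>D\<^esub> alphaX p (fst (SOME x. x \<in> Q)))"
  by (simp add: Yplus_def quotient_digraph_def Y_def derived_digraph_def case_prod_beta)

lemma some_Ar: "(SOME x. x \<in> Ar e s) = (e, s) \<or> (SOME x. x \<in> Ar e s) = (e, neg s)"
proof -
  have "(SOME x. x \<in> Ar e s) \<in> Ar e s" by (rule someI[of _ "(e, s)"]) (simp add: Ar_def)
  then show ?thesis by (simp add: Ar_def)
qed

lemma tail_Ar: "s \<in> C \<Longrightarrow> tail (Yplus p) (Ar e s) = Ov s"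
  using some_Ar[of e s] neg_C[of s] by (auto simp: Yp_tail lo_Ov Ov_neg)

lemma head_Ar: "s \<in> C \<Longrightarrow> alphaX p e \<in> C \<Longrightarrow> head (Yplus p) (Ar e s) = Ov (s \<otimes>\<^bsub>D\<^esub> alphaX p e)"
proof -
  assume s: "s \<in> C" and a: "alphaX p e \<in> C"
  have sa: "s \<otimes>\<^bsub>D\<^esub> alphaX p e \<in> C" by (rule mC[OF s a])
  have nsa: "neg (s \<otimes>\<^bsub>D\<^esub> alphaX p e) \<in> C" by (rule neg_C[OF sa])
  show ?thesis
  proof (cases "(SOME x. x \<in> Ar e s) = (e, s)")
    case True
    then show ?thesis by (simp only: Yp_head fst_conv snd_conv lo_Ov[OF sa])
  next
    case False
    then have eq: "(SOME x. x \<in> Ar e s) = (e, neg s)" using some_Ar by blast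
    have "head (Yplus p) (Ar e s) = left_orbit D H ((), neg (s \<otimes>\<^bsub>D\<^esub> alphaX p e))"
      by (simp only: Yp_head eq fst_conv snd_conv neg_mult[OF s a])
    also have "\<dots> = Ov (s \<otimes>\<^bsub>D\<^esub> alphaX p e)" by (simp only: lo_Ov[OF nsa] Ov_neg)
    finally show ?thesis .
  qed
qed

lemma alpha_E0: "alphaX p E0 = 1"
  using p3 by (simp add: alphaX_def sigma_def)

lemma alpha_E: "u \<in> C \<Longrightarrow> alphaX p (E (nat u) k) = inv\<^bsub>D\<^esub> u"
  by (simp add: alphaX_def sigma_def)

definition Bs :: "(int \<times> nat) set" where "Bs = (SIGMA u:C. {1..nat u})"
definition be :: "int \<times> nat \<Rightarrow> bedge" where "be x = E (nat (fst x)) (snd x)"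

lemma arcsX: "arcs (bouquetX p) = insert E0 (be ` Bs)"
proof -
  have "{E i k | i k. 1 \<le> k \<and> k \<le> i \<and> i \<le> p - 1} = be ` Bs"
  proof
    show "{E i k | i k. 1 \<le> k \<and> k \<le> i \<and> i \<le> p - 1} \<subseteq> be ` Bs"
    proof
      fix x assume "x \<in> {E i k | i k. 1 \<le> k \<and> k \<le> i \<and> i \<le> p - 1}"
      then obtain i k where x: "x = E i k" "1 \<le> k" "k \<le> i" "i \<le> p - 1" by blast
      then have "(int i, k) \<in> Bs" using p3 by (auto simp: Bs_def)
      moreover have "x = be (int i, k)" using x by (simp add: be_def)
      ultimately show "x \<in> be ` Bs" by blast
    qed
  next
    show "be ` Bs \<subseteq> {E i k | i k. 1 \<le> k \<and> k \<le> i \<and> i \<le> p - 1}"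
      by (auto simp: Bs_def be_def)
  qed
  then show ?thesis by (simp add: bouquetX_def)
qed

lemma finBs: "finite Bs" by (simp add: Bs_def)

lemma inj_be: "inj_on be Bs"
  by (auto simp: inj_on_def Bs_def be_def)

lemma E0_notin: "E0 \<notin> be ` Bs" by (auto simp: be_def)

lemma finX: "finite (arcs (bouquetX p))" using arcsX finBs by simp

lemma alphaC: "e \<in> arcs (bouquetX p) \<Longrightarrow> alphaX p e \<in> C"
proof -
  assume "e \<in> arcs (bouquetX p)"
  then consider "e = E0" | x where "x \<in> Bs" "e = be x" using arcsX by auto
  then show ?thesis
  proof cases
    case 1 then show ?thesis using p3 by (simp add: alpha_E0)
  next
    case 2
    then have u: "fst x \<in> C" by (auto simp: Bs_def)
    have "alphaX p e = inv\<^bsub>D\<^esub> (fst x)" using 2 alpha_E[OF u] by (simp add: be_def)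
    then show ?thesis using iC[OF u] by simp
  qed
qed

lemma tails: "s0 \<in> C \<Longrightarrow> {\<epsilon> \<in> arcs (Yplus p). tail (Yplus p) \<epsilon> = Ov s0} = (\<lambda>e. Ar e s0) ` arcs (bouquetX p)"
proof
  assume s0: "s0 \<in> C"
  show "{\<epsilon> \<in> arcs (Yplus p). tail (Yplus p) \<epsilon> = Ov s0} \<subseteq> (\<lambda>e. Ar e s0) ` arcs (bouquetX p)"
  proof
    fix \<epsilon> assume "\<epsilon> \<in> {\<epsilon> \<in> arcs (Yplus p). tail (Yplus p) \<epsilon> = Ov s0}"
    then obtain e s where es: "e \<in> arcs (bouquetX p)" "s \<in> C" "\<epsilon> = Ar e s" "tail (Yplus p) \<epsilon> = Ov s0"
      by (auto simp: Yp_arcs)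
    then have "Ov s = Ov s0" using tail_Ar by simp
    then have "s = s0 \<or> s = neg s0" using Ov_eq s0 es(2) by blast
    then have "\<epsilon> = Ar e s0" using es(3) Ar_neg by auto
    then show "\<epsilon> \<in> (\<lambda>e. Ar e s0) ` arcs (bouquetX p)" using es(1) by blast
  qed
  show "(\<lambda>e. Ar e s0) ` arcs (bouquetX p) \<subseteq> {\<epsilon> \<in> arcs (Yplus p). tail (Yplus p) \<epsilon> = Ov s0}"
  proof
    fix \<epsilon> assume "\<epsilon> \<in> (\<lambda>e. Ar e s0) ` arcs (bouquetX p)"
    then obtain e where e: "e \<in> arcs (bouquetX p)" "\<epsilon> = Ar e s0" by blast
    have "\<epsilon> \<in> arcs (Yplus p)" unfolding Yp_arcs using e s0
      by (intro image_eqI[of _ _ "(e, s0)"]) auto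
    moreover have "tail (Yplus p) \<epsilon> = Ov s0" using e(2) tail_Ar[OF s0] by simp
    ultimately show "\<epsilon> \<in> {\<epsilon> \<in> arcs (Yplus p). tail (Yplus p) \<epsilon> = Ov s0}" by simp
  qed
qed

lemma inj_Ar: "inj_on (\<lambda>e. Ar e s0) A"
proof (rule inj_onI)
  fix e e' assume "Ar e s0 = Ar e' s0"
  moreover have "(e, s0) \<in> Ar e s0" by (simp add: Ar_def)
  ultimately have "(e, s0) \<in> Ar e' s0" by simp
  then show "e = e'" by (auto simp: Ar_def)
qed

lemma adj_sum: "s0 \<in> C \<Longrightarrow> adj_op (Yplus p) (Ov s0) = (\<Sum>e\<in>arcs (bouquetX p). frag_of (Ov (s0 \<otimes>\<^bsub>D\<^esub> alphaX p e)))"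
proof -
  assume s0: "s0 \<in> C"
  show ?thesis unfolding adj_op_def tails[OF s0] sum.reindex[OF inj_Ar] comp_def
    by (intro sum.cong refl) (simp only: head_Ar[OF s0 alphaC])
qed


lemma one_r: "s \<in> C \<Longrightarrow> s \<otimes>\<^bsub>D\<^esub> 1 = s"
  by (simp add: multD)

lemma sum_split: "s0 \<in> C \<Longrightarrow> (\<Sum>e\<in>arcs (bouquetX p). frag_of (Ov (s0 \<otimes>\<^bsub>D\<^esub> alphaX p e)))
   = frag_of (Ov s0) + (\<Sum>u\<in>C. frag_cmul u (frag_of (Ov (s0 \<otimes>\<^bsub>D\<^esub> inv\<^bsub>D\<^esub> u))))"
proof -
  assume s0: "s0 \<in> C"
  let ?F = "\<lambda>e. frag_of (Ov (s0 \<otimes>\<^bsub>D\<^esub> alphaX p e))"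
  have "(\<Sum>e\<in>arcs (bouquetX p). ?F e) = ?F E0 + (\<Sum>e\<in>be ` Bs. ?F e)"
    unfolding arcsX using finBs E0_notin by (simp add: sum.insert)
  also have "?F E0 = frag_of (Ov s0)" using one_r[OF s0] by (simp add: alpha_E0)
  also have "(\<Sum>e\<in>be ` Bs. ?F e) = (\<Sum>x\<in>Bs. ?F (be x))"
    by (simp add: sum.reindex[OF inj_be])
  also have "\<dots> = (\<Sum>x\<in>Bs. frag_of (Ov (s0 \<otimes>\<^bsub>D\<^esub> inv\<^bsub>D\<^esub> (fst x))))"
  proof (rule sum.cong[OF refl])
    fix x assume "x \<in> Bs"
    then have "fst x \<in> C" by (auto simp: Bs_def)
    then show "?F (be x) = frag_of (Ov (s0 \<otimes>\<^bsub>D\<^esub> inv\<^bsub>D\<^esub> (fst x)))"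
      by (simp add: be_def alpha_E del: atLeastAtMost_iff)
  qed
  also have "\<dots> = (\<Sum>u\<in>C. \<Sum>k\<in>{1..nat u}. frag_of (Ov (s0 \<otimes>\<^bsub>D\<^esub> inv\<^bsub>D\<^esub> u)))"
    unfolding Bs_def by (subst sum.Sigma) (auto simp: case_prod_beta)
  also have "\<dots> = (\<Sum>u\<in>C. frag_cmul u (frag_of (Ov (s0 \<otimes>\<^bsub>D\<^esub> inv\<^bsub>D\<^esub> u))))"
    by (intro sum.cong refl) (simp add: frag_cmul_const_sum)
  finally show ?thesis .
qed

lemma fiber: "s \<in> C \<Longrightarrow> {x \<in> C. Ov x = Ov s} = {s, neg s}"
  using Ov_eq[of s] neg_C[of s] by auto

lemma card_fiber: "s \<in> C \<Longrightarrow> card {x \<in> C. Ov x = Ov s} = 2"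
  using fiber[of s] neg_ne[of s] by simp

lemma card_verts: "card (Ov ` C) = (p - 1) div 2"
proof -
  have "card C = (\<Sum>x\<in>C. (1::nat))" by simp
  also have "\<dots> = (\<Sum>y\<in>Ov ` C. \<Sum>x\<in>{x \<in> C. Ov x = y}. (1::nat))"
    by (rule sum.image_gen) simp
  also have "\<dots> = (\<Sum>y\<in>Ov ` C. 2)"
  proof (rule sum.cong[OF refl])
    fix y assume "y \<in> Ov ` C"
    then obtain s where s: "s \<in> C" "y = Ov s" by blast
    show "(\<Sum>x\<in>{x \<in> C. Ov x = y}. (1::nat)) = 2" unfolding s(2) using card_fiber[OF s(1)] by simp
  qed
  also have "\<dots> = 2 * card (Ov ` C)" by simp
  finally have "card C = 2 * card (Ov ` C)" .
  moreover have "card C = p - 1" using p3 by simp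
  ultimately show ?thesis by simp
qed

lemma sum_g: "(\<Sum>u\<in>C. frag_of (Ov u)) = frag_cmul 2 (\<Sum>v\<in>Ov ` C. frag_of v)"
proof -
  have "(\<Sum>u\<in>C. frag_of (Ov u)) = (\<Sum>y\<in>Ov ` C. \<Sum>x\<in>{x \<in> C. Ov x = y}. frag_of (Ov x))"
    by (rule sum.image_gen) simp
  also have "\<dots> = (\<Sum>y\<in>Ov ` C. frag_cmul 2 (frag_of y))"
  proof (rule sum.cong[OF refl])
    fix y assume "y \<in> Ov ` C"
    then obtain s where s: "s \<in> C" "y = Ov s" by blast
    have fin: "finite {x \<in> C. Ov x = y}" by (rule finite_subset[of _ C]) auto
    have "(\<Sum>x\<in>{x \<in> C. Ov x = y}. frag_of (Ov x)) = (\<Sum>x\<in>{x \<in> C. Ov x = y}. frag_of y)"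
      by (intro sum.cong refl) auto
    also have "\<dots> = frag_cmul (int (card {x \<in> C. Ov x = y})) (frag_of y)"
      by (rule frag_cmul_const_sum[OF fin])
    also have "\<dots> = frag_cmul 2 (frag_of y)"
      unfolding s(2) card_fiber[OF s(1)] by simp
    finally show "(\<Sum>x\<in>{x \<in> C. Ov x = y}. frag_of (Ov x)) = frag_cmul 2 (frag_of y)" .
  qed
  also have "\<dots> = frag_cmul 2 (\<Sum>v\<in>Ov ` C. frag_of v)" by (simp add: frag_cmul_sum)
  finally show ?thesis .
qed

lemma inv_j: "inv\<^bsub>D\<^esub> (jconj p) = jconj p"
proof -
  interpret G: comm_group D by (rule cgD)
  show ?thesis using jj jC carrD by (simp add: G.inv_equality)
qed

lemma psi_facts:
  assumes s0: "s0 \<in> C" and u: "u \<in> C"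
  shows "inv\<^bsub>D\<^esub> u \<otimes>\<^bsub>D\<^esub> s0 \<in> C"
    and "inv\<^bsub>D\<^esub> (inv\<^bsub>D\<^esub> u \<otimes>\<^bsub>D\<^esub> s0) \<otimes>\<^bsub>D\<^esub> s0 = u"
    and "s0 \<otimes>\<^bsub>D\<^esub> inv\<^bsub>D\<^esub> (inv\<^bsub>D\<^esub> u \<otimes>\<^bsub>D\<^esub> s0) = u"
    and "inv\<^bsub>D\<^esub> (neg u) \<otimes>\<^bsub>D\<^esub> s0 = neg (inv\<^bsub>D\<^esub> u \<otimes>\<^bsub>D\<^esub> s0)"
proof -
  interpret G: comm_group D by (rule cgD)
  have s0': "s0 \<in> carrier D" and u': "u \<in> carrier D" and j': "jconj p \<in> carrier D"
    using s0 u jC carrD by auto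
  have "inv\<^bsub>D\<^esub> u \<otimes>\<^bsub>D\<^esub> s0 \<in> carrier D" using s0' u' by simp
  then show pC: "inv\<^bsub>D\<^esub> u \<otimes>\<^bsub>D\<^esub> s0 \<in> C" by (simp only: carrD)
  have e1: "inv\<^bsub>D\<^esub> (inv\<^bsub>D\<^esub> u \<otimes>\<^bsub>D\<^esub> s0) = u \<otimes>\<^bsub>D\<^esub> inv\<^bsub>D\<^esub> s0"
    using s0' u' by (simp add: G.inv_mult)
  show "inv\<^bsub>D\<^esub> (inv\<^bsub>D\<^esub> u \<otimes>\<^bsub>D\<^esub> s0) \<otimes>\<^bsub>D\<^esub> s0 = u"
    unfolding e1 using s0' u' by (simp add: G.m_assoc)
  show "s0 \<otimes>\<^bsub>D\<^esub> inv\<^bsub>D\<^esub> (inv\<^bsub>D\<^esub> u \<otimes>\<^bsub>D\<^esub> s0) = u"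
  proof -
    have "s0 \<otimes>\<^bsub>D\<^esub> (u \<otimes>\<^bsub>D\<^esub> inv\<^bsub>D\<^esub> s0) = u \<otimes>\<^bsub>D\<^esub> (s0 \<otimes>\<^bsub>D\<^esub> inv\<^bsub>D\<^esub> s0)"
      by (rule G.m_lcomm) (use s0' u' in auto)
    also have "\<dots> = u" using s0' u' by simp
    finally show ?thesis unfolding e1 .
  qed
  have "neg u = jconj p \<otimes>\<^bsub>D\<^esub> u" using j_mult[OF u] by simp
  then have "inv\<^bsub>D\<^esub> (neg u) \<otimes>\<^bsub>D\<^esub> s0 = jconj p \<otimes>\<^bsub>D\<^esub> (inv\<^bsub>D\<^esub> u \<otimes>\<^bsub>D\<^esub> s0)"
    using s0' u' j' by (simp add: G.inv_mult inv_j G.m_assoc)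
  also have "\<dots> = neg (inv\<^bsub>D\<^esub> u \<otimes>\<^bsub>D\<^esub> s0)"
    by (rule j_mult[OF pC])
  finally show "inv\<^bsub>D\<^esub> (neg u) \<otimes>\<^bsub>D\<^esub> s0 = neg (inv\<^bsub>D\<^esub> u \<otimes>\<^bsub>D\<^esub> s0)" .
qed

lemma pairing:
  assumes s0: "s0 \<in> C"
  shows "(\<Sum>u\<in>C. frag_cmul u (frag_of (Ov (s0 \<otimes>\<^bsub>D\<^esub> inv\<^bsub>D\<^esub> u))))
       = frag_cmul (int p) (\<Sum>v\<in>Ov ` C. frag_of v)"
proof -
  define psi where "psi u = inv\<^bsub>D\<^esub> u \<otimes>\<^bsub>D\<^esub> s0" for u
  define g where "g u = frag_of (Ov u)" for u
  define N where "N = (\<Sum>v\<in>Ov ` C. frag_of v)"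
  let ?T = "(\<Sum>u\<in>C. frag_cmul u (frag_of (Ov (s0 \<otimes>\<^bsub>D\<^esub> inv\<^bsub>D\<^esub> u))))"
  have psiC: "\<And>u. u \<in> C \<Longrightarrow> psi u \<in> C" using psi_facts(1)[OF s0] by (simp add: psi_def)
  have psipsi: "\<And>u. u \<in> C \<Longrightarrow> psi (psi u) = u" using psi_facts(2)[OF s0] by (simp add: psi_def)
  have s0psi: "\<And>u. u \<in> C \<Longrightarrow> s0 \<otimes>\<^bsub>D\<^esub> inv\<^bsub>D\<^esub> (psi u) = u" using psi_facts(3)[OF s0] by (simp add: psi_def)
  have psineg: "\<And>u. u \<in> C \<Longrightarrow> psi (neg u) = neg (psi u)" using psi_facts(4)[OF s0] by (simp add: psi_def)
  have T1: "(\<Sum>u\<in>C. frag_cmul (psi u) (g u)) = ?T"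
  proof (rule sum.reindex_bij_witness[where i = psi and j = psi])
    fix a assume a: "a \<in> C"
    show "psi (psi a) = a" by (rule psipsi[OF a])
    show "psi a \<in> C" by (rule psiC[OF a])
    show "frag_cmul (psi a) (frag_of (Ov (s0 \<otimes>\<^bsub>D\<^esub> inv\<^bsub>D\<^esub> (psi a)))) = frag_cmul (psi a) (g a)"
      using s0psi[OF a] by (simp add: g_def)
  qed (simp_all only: psipsi psiC)
  have T2: "(\<Sum>u\<in>C. frag_cmul (neg (psi u)) (g u)) = (\<Sum>u\<in>C. frag_cmul (psi u) (g u))"
  proof (rule sum.reindex_bij_witness[where i = neg and j = neg])
    fix a assume a: "a \<in> C"
    show "neg (neg a) = a" by simp
    show "neg a \<in> C" by (rule neg_C[OF a])
    show "frag_cmul (psi (neg a)) (g (neg a)) = frag_cmul (neg (psi a)) (g a)"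
      using psineg[OF a] by (simp add: g_def Ov_neg)
  qed (simp_all only: neg_neg neg_C)
  have "?T + ?T = (\<Sum>u\<in>C. frag_cmul (psi u) (g u) + frag_cmul (neg (psi u)) (g u))"
    by (simp add: T1[symmetric] T2 sum.distrib)
  also have "\<dots> = (\<Sum>u\<in>C. frag_cmul (int p) (g u))"
    by (intro sum.cong refl) (simp add: frag_cmul_distrib[symmetric] neg_def)
  also have "\<dots> = frag_cmul (int p) (frag_cmul 2 N)"
    using sum_g by (simp add: frag_cmul_sum[symmetric] g_def N_def)
  finally have TT: "?T + ?T = frag_cmul (int p) (frag_cmul 2 N)" .
  show ?thesis
  proof (rule poly_mapping_eqI)
    fix x
    have "2 * Poly_Mapping.lookup ?T x = 2 * (int p * Poly_Mapping.lookup N x)"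
      using arg_cong[OF TT, of "\<lambda>f. Poly_Mapping.lookup f x"] by (simp add: lookup_add)
    then show "Poly_Mapping.lookup ?T x = Poly_Mapping.lookup (frag_cmul (int p) (\<Sum>v\<in>Ov ` C. frag_of v)) x"
      by (simp add: N_def)
  qed
qed

lemma adjYp: "w \<in> verts (Yplus p) \<Longrightarrow>
   adj_op (Yplus p) w = frag_of w + frag_cmul (int p) (\<Sum>v\<in>verts (Yplus p). frag_of v)"
proof -
  assume "w \<in> verts (Yplus p)"
  then obtain s0 where s0: "s0 \<in> C" "w = Ov s0" by (auto simp: Yp_verts)
  show ?thesis
    unfolding s0(2) adj_sum[OF s0(1)] sum_split[OF s0(1)] pairing[OF s0(1)] Yp_verts ..
qed

end

theorem proposition5p4:
  fixes p :: nat
  assumes "prime p" and "odd p"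
  shows "BF (Yplus p) \<cong> DirProd (free_Abelian_group {..<(p - 3) div 2}) (integer_mod_group p)"
proof -
  interpret PP p using assms by unfold_locales
  have v0: "Ov 1 \<in> verts (Yplus p)" using p3 by (simp add: Yp_verts)
  have fin: "finite (verts (Yplus p))" by (simp add: Yp_verts)
  have c: "card (verts (Yplus p)) - 1 = (p - 3) div 2"
    using p3 by (simp add: Yp_verts card_verts)
  have "BF (Yplus p) \<cong> DirProd (free_Abelian_group {..<card (verts (Yplus p)) - 1}) (integer_mod_group p)"
    by (rule BF_generic[OF fin v0]) (use p3 adjYp in auto)
  then show ?thesis unfolding c .
qed

end
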